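(* Let $\gamma\in(0,1)$ and let $\rho(w,t)>0$, $w>0$, $t\ge0$, be a sufficiently smooth solution of the yard-sale model equation $$\partial_t\rho(w,t)=\partial_w^2\Big[\Big(\frac{\gamma}{2}\int_0^\infty \min(w,x)^2\,\rho(x,t)\,dx\Big)\rho(w,t)\Big],$$ with $\rho(0,t)=0$, $\lim_{w\to\infty}\rho(w,t)=0$ for $t>0$, and initial condition $\rho_0$ a positive probability density on $(0,\infty)$ with $\int_0^\infty\rho_0(w)\,dw=1=\int_0^\infty w\,\rho_0(w)\,dw$; assume also that the boundary terms at $w=0$ vanish, i.e. $D\rho\to0$ and $w\,\partial_w(D\rho)\to0$ and $\partial_w(D\rho)\to 0$ as $w\to0^+$, where $D[w,t,\rho]=\frac{\gamma}{2}\int_0^\infty\min(w,x)^2\rho(x,t)\,dx$. Let $F(w,t)=\int_0^w\rho(y,t)\,dy$, $G(\cdot,t)$ its inverse, and $\mathcal{L}(f,t)=\int_0^{G(f,t)}y\,\rho(y,t)\,dy$ the Lorenz curve. Then for $f\in(0,1)$, $t>0$, $$\partial_t\mathcal{L}(f,t)=-\frac{1}{\partial_f^2\mathcal{L}(f,t)}\,\frac{\gamma}{2}\int_0^1\min\big(\partial_g\mathcal{L}(g,t),\,\partial_f\mathcal{L}(f,t)\big)^2\,dg .$$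
   Context: Here $\min(a,b)$ is the minimum of $a$ and $b$. The equation models the evolution of the density of agents in wealth space $w>0$; it conserves total probability and total wealth (first moment), both normalized to $1$. *)

theory Defs
  imports "HOL-Analysis.Analysis"
begin

definition ysm_D :: "real \<Rightarrow> (real \<Rightarrow> real \<Rightarrow> real) \<Rightarrow> real \<Rightarrow> real \<Rightarrow> real" where
  "ysm_D \<gamma> \<rho> w t = \<gamma> / 2 * (LBINT x:{0<..}. (min w x)\<^sup>2 * \<rho> x t)"

definition ysm_F :: "(real \<Rightarrow> real \<Rightarrow> real) \<Rightarrow> real \<Rightarrow> real \<Rightarrow> real" where
  "ysm_F \<rho> w t = (LBINT y:{0<..w}. \<rho> y t)"

definition ysm_G :: "(real \<Rightarrow> real \<Rightarrow> real) \<Rightarrow> real \<Rightarrow> real \<Rightarrow> real" where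
  "ysm_G \<rho> f t = (THE w. 0 < w \<and> ysm_F \<rho> w t = f)"

definition lorenz :: "(real \<Rightarrow> real \<Rightarrow> real) \<Rightarrow> real \<Rightarrow> real \<Rightarrow> real" where
  "lorenz \<rho> f t = (LBINT y:{0<..ysm_G \<rho> f t}. y * \<rho> y t)"

end

theory Submission
  imports Defs "HOL-Analysis.Analysis"
begin



lemma indef_deriv:
  fixes q :: "real \<Rightarrow> real"
  assumes cq: "continuous_on {0<..} q" and iq: "set_integrable lborel {0<..} q" and w: "0 < w"
  shows "((\<lambda>u. LBINT y:{0<..u}. q y) has_real_derivative q w) (at w)"
proof -
  define c where "c = w/2"
  have c: "0 < c" "c < w" "w < 2*w" using w by (auto simp: c_def)
  have eq: "(LBINT y:{0<..u}. q y) = (LBINT y:{0<..c}. q y) + (LBINT y=c..u. q y)"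
    if "u \<in> {c<..<2*w}" for u
  proof -
    have "{0<..u} = {0<..c} \<union> {c<..u}" using that c by auto
    moreover have "(LBINT y:{0<..c} \<union> {c<..u}. q y) = (LBINT y:{0<..c}. q y) + (LBINT y:{c<..u}. q y)"
      by (rule set_integral_Un) (use c in \<open>auto intro!: set_integrable_subset[OF iq]\<close>)
    moreover have "(LBINT y=c..u. q y) = (LBINT y:{c<..u}. q y)"
      using that by (intro interval_integral_Ioc) auto
    ultimately show ?thesis by simp
  qed
  have co: "continuous_on {c..2*w} q" by (rule continuous_on_subset[OF cq]) (use c in auto)
  have "((\<lambda>u. LBINT y=c..u. q y) has_vector_derivative q w) (at w within {c..2*w})"
    by (rule interval_integral_FTC2) (use c co in auto)
  then have "((\<lambda>u. LBINT y=c..u. q y) has_real_derivative q w) (at w)"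
    using c by (simp add: at_within_Icc_at has_real_derivative_iff_has_vector_derivative)
  then have "((\<lambda>u. (LBINT y:{0<..c}. q y) + (LBINT y=c..u. q y)) has_real_derivative q w) (at w)"
    by (auto intro!: derivative_eq_intros)
  then show ?thesis
    by (rule has_field_derivative_transform_within_open[where S="{c<..<2*w}"]) (use c eq in auto)
qed


locale dens =
  fixes p :: "real \<Rightarrow> real"
  assumes p_pos: "\<And>w. 0 < w \<Longrightarrow> 0 < p w"
    and p_cont: "continuous_on {0<..} p"
    and p_int: "set_integrable lborel {0<..} p"
    and p_one: "(LBINT x:{0<..}. p x) = 1"
    and p_mom: "set_integrable lborel {0<..} (\<lambda>x. x * p x)"
begin

definition Fp :: "real \<Rightarrow> real" where "Fp w = (LBINT y:{0<..w}. p y)"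

lemma Fp_deriv: "0 < w \<Longrightarrow> (Fp has_real_derivative p w) (at w)"
  unfolding Fp_def[abs_def] by (rule indef_deriv[OF p_cont p_int])

lemma Fp_isCont: "0 < w \<Longrightarrow> isCont Fp w"
  using Fp_deriv DERIV_isCont by blast

lemma Fp_less: assumes "0 < a" "a < b" shows "Fp a < Fp b"
proof (rule DERIV_pos_imp_increasing[OF assms(2)])
  fix x assume "a \<le> x" "x \<le> b"
  then have "0 < x" using assms by auto
  then show "\<exists>y. (Fp has_real_derivative y) (at x) \<and> 0 < y"
    using Fp_deriv p_pos by blast
qed

lemma p_nonneg[simp]: "0 < x \<Longrightarrow> 0 \<le> p x"
  using p_pos[of x] by simp

lemma Fp_nonneg: "0 \<le> Fp w"
  unfolding Fp_def set_lebesgue_integral_def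
  by (rule Bochner_Integration.integral_nonneg) (auto simp: indicator_def)

lemma meas_p: "(\<lambda>x. indicator {0<..} x * p x) \<in> borel_measurable lborel"
  using p_int unfolding set_integrable_def by auto

lemma Fp_alt: "Fp u = (LINT x|lborel. indicator {..u} x * (indicator {0<..} x * p x))"
  unfolding Fp_def set_lebesgue_integral_def
  by (rule Bochner_Integration.integral_cong) (auto simp: indicator_def)

lemma Fp_alt2: "Fp u = (LINT x|lborel. indicator {0<..u} x * (indicator {0<..} x * p x))"
  unfolding Fp_def set_lebesgue_integral_def
  by (rule Bochner_Integration.integral_cong) (auto simp: indicator_def)

lemma Fp_top: "(Fp \<longlongrightarrow> 1) at_top"
proof -
  have "((\<lambda>u. LINT x|lborel. indicator {..u} x * (indicator {0<..} x * p x)) \<longlongrightarrow>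
        (LINT x|lborel. indicator {0<..} x * p x)) at_top"
  proof (rule integral_dominated_convergence_at_top[where w="\<lambda>x. indicator {0<..} x * p x"
     and f="\<lambda>x. indicator {0<..} x * p x" and s="\<lambda>u x. indicator {..u} x * (indicator {0<..} x * p x)"])
    show "(\<lambda>x. indicator {0<..} x * p x) \<in> borel_measurable lborel" by (rule meas_p)
    show "(\<lambda>x. indicator {..u} x * (indicator {0<..} x * p x)) \<in> borel_measurable lborel" for u
      using meas_p by measurable
    show "integrable lborel (\<lambda>x. indicator {0<..} x * p x)"
      using p_int unfolding set_integrable_def by simp
    show "AE x in lborel. ((\<lambda>u. indicator {..u} x * (indicator {0<..} x * p x)) \<longlongrightarrow>
        indicator {0<..} x * p x) at_top"
    proof (rule AE_I2)
      fix x :: real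
      have "\<forall>\<^sub>F u in at_top. indicator {..u} x * (indicator {0<..} x * p x) = indicator {0<..} x * p x"
        using eventually_ge_at_top[of x] by eventually_elim (auto simp: indicator_def)
      then show "((\<lambda>u. indicator {..u} x * (indicator {0<..} x * p x)) \<longlongrightarrow>
        indicator {0<..} x * p x) at_top"
        by (rule tendsto_eventually)
    qed
    show "\<forall>\<^sub>F u in at_top. AE x in lborel. norm (indicator {..u} x * (indicator {0<..} x * p x))
        \<le> indicator {0<..} x * p x"
      by (intro always_eventually allI AE_I2) (auto simp: indicator_def abs_of_pos p_pos)
  qed
  then show ?thesis using p_one unfolding Fp_alt set_lebesgue_integral_def by simp
qed

lemma Fp_zero: "(Fp \<longlongrightarrow> 0) (at_right 0)"
proof -
  have "((\<lambda>u. LINT x|lborel. indicator {0<..inverse u} x * (indicator {0<..} x * p x)) \<longlongrightarrow>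
        integral\<^sup>L lborel (\<lambda>x::real. 0::real)) at_top"
  proof (rule integral_dominated_convergence_at_top[where w="\<lambda>x. indicator {0<..} x * p x"
      and f="\<lambda>x. 0" and s="\<lambda>u x. indicator {0<..inverse u} x * (indicator {0<..} x * p x)"])
    show "(\<lambda>x. 0::real) \<in> borel_measurable lborel" by simp
    show "(\<lambda>x. indicator {0<..inverse u} x * (indicator {0<..} x * p x)) \<in> borel_measurable lborel" for u
      using meas_p by measurable
    show "integrable lborel (\<lambda>x. indicator {0<..} x * p x)"
      using p_int unfolding set_integrable_def by simp
    show "AE x in lborel. ((\<lambda>u. indicator {0<..inverse u} x * (indicator {0<..} x * p x)) \<longlongrightarrow>
        0) at_top"
    proof (rule AE_I2)
      fix x :: real
      show "((\<lambda>u. indicator {0<..inverse u} x * (indicator {0<..} x * p x)) \<longlongrightarrow> 0) at_top"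
      proof (cases "x > 0")
        case True
        have "\<forall>\<^sub>F u in at_top. indicator {0<..inverse u} x * (indicator {0<..} x * p x) = (0::real)"
          using eventually_gt_at_top[of "inverse x"]
        proof eventually_elim
          case (elim u)
          then have "inverse u < x" using True
            by (metis inverse_inverse_eq inverse_less_imp_less inverse_positive_iff_positive)
          then show ?case by (auto simp: indicator_def)
        qed
        then show ?thesis by (rule tendsto_eventually)
      next
        case False
        then show ?thesis by (simp add: indicator_def)
      qed
    qed
    show "\<forall>\<^sub>F u in at_top. AE x in lborel. norm (indicator {0<..inverse u} x * (indicator {0<..} x * p x))
        \<le> indicator {0<..} x * p x"
      by (intro always_eventually allI AE_I2) (auto simp: indicator_def abs_of_pos p_pos)
  qed
  then show ?thesis unfolding filterlim_at_right_to_top Fp_alt2 by simp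
qed

lemma Fp_le1: "Fp w \<le> 1"
proof -
  have "\<forall>\<^sub>F u in at_top. Fp w \<le> Fp u"
    using eventually_gt_at_top[of "max w 1"]
  proof eventually_elim
    case (elim u)
    show ?case
    proof (cases "w > 0")
      case True then show ?thesis using Fp_less[of w u] elim by auto
    next
      case False
      then have "Fp w = 0" unfolding Fp_def by (simp add: not_less set_lebesgue_integral_def)
      then show ?thesis using Fp_nonneg by simp
    qed
  qed
  then show ?thesis by (intro tendsto_lowerbound[OF Fp_top]) auto
qed

lemma Fp_range: assumes "0 < w" shows "0 < Fp w" "Fp w < 1"
  using Fp_less[of "w/2" w] Fp_less[of w "2*w"] Fp_nonneg[of "w/2"] Fp_le1[of "2*w"] assms by auto

lemma Fp_ex1: assumes "0 < f" "f < 1" shows "\<exists>!w. 0 < w \<and> Fp w = f"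
proof -
  obtain a where a: "0 < a" "Fp a < f"
  proof -
    have "\<forall>\<^sub>F x in at_right 0. Fp x < f" using order_tendstoD(2)[OF Fp_zero assms(1)] .
    then obtain b where "0 < b" "\<And>y. 0 < y \<Longrightarrow> y < b \<Longrightarrow> Fp y < f"
      unfolding eventually_at_right_field by auto
    then have "0 < b/2" "Fp (b/2) < f" by auto
    then show ?thesis using that by blast
  qed
  obtain b where b: "a < b" "f < Fp b"
  proof -
    have "\<forall>\<^sub>F x in at_top. f < Fp x \<and> a < x"
      using order_tendstoD(1)[OF Fp_top assms(2)] eventually_gt_at_top[of a] by eventually_elim auto
    then obtain N where "\<And>x. x \<ge> N \<Longrightarrow> f < Fp x \<and> a < x"
      unfolding eventually_at_top_linorder by auto
    then have "f < Fp N" "a < N" by auto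
    then show ?thesis using that by blast
  qed
  have "continuous_on {a..b} Fp"
    using a by (intro continuous_at_imp_continuous_on) (auto intro!: Fp_isCont)
  then obtain w where "a \<le> w" "w \<le> b" "Fp w = f"
    using IVT'[of Fp a f b] a b by auto
  then have ex: "0 < w \<and> Fp w = f" using a by auto
  show ?thesis
  proof (rule ex1I[of _ w])
    show "0 < w \<and> Fp w = f" by (rule ex)
    fix v assume "0 < v \<and> Fp v = f"
    then show "v = w" using ex Fp_less[of v w] Fp_less[of w v] by (cases v w rule: linorder_cases) auto
  qed
qed


definition Gp :: "real \<Rightarrow> real" where "Gp f = (THE w. 0 < w \<and> Fp w = f)"

lemma Gp: assumes "0 < f" "f < 1" shows "0 < Gp f" "Fp (Gp f) = f"
  using theI'[OF Fp_ex1[OF assms]] unfolding Gp_def by auto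

lemma Gp_Fp: assumes "0 < x" shows "Gp (Fp x) = x"
  unfolding Gp_def using Fp_ex1[OF Fp_range[OF assms]] assms by (intro the1_equality) auto

lemma Gp_isCont: assumes "0 < f" "f < 1" shows "isCont Gp f"
proof -
  have "isCont Gp (Fp (Gp f))"
  proof (rule isCont_inverse_function[where d="Gp f / 2" and f=Fp and g=Gp and x="Gp f"])
    show "0 < Gp f / 2" using Gp[OF assms] by simp
  next
    fix z assume "\<bar>z - Gp f\<bar> \<le> Gp f / 2"
    then have "0 < z" using Gp[OF assms] by linarith
    then show "Gp (Fp z) = z" by (auto intro: Gp_Fp)
  next
    fix z assume "\<bar>z - Gp f\<bar> \<le> Gp f / 2"
    then have "0 < z" using Gp[OF assms] by linarith
    then show "isCont Fp z" by (auto intro: Fp_isCont)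
  qed
  then show ?thesis using Gp[OF assms] by simp
qed

lemma Gp_deriv: assumes "0 < f" "f < 1" shows "(Gp has_real_derivative inverse (p (Gp f))) (at f)"
proof (rule DERIV_inverse_function[where a=0 and b=1])
  show "(Fp has_real_derivative p (Gp f)) (at (Gp f))" using Gp[OF assms] by (intro Fp_deriv) auto
  show "p (Gp f) \<noteq> 0" using Gp[OF assms] p_pos[of "Gp f"] by auto
  show "Fp (Gp y) = y" if "0 < y" "y < 1" for y using Gp that by auto
  show "isCont Gp f" by (rule Gp_isCont[OF assms])
qed (use assms in auto)

definition Mp :: "real \<Rightarrow> real" where "Mp w = (LBINT y:{0<..w}. y * p y)"

lemma Mp_deriv: "0 < w \<Longrightarrow> (Mp has_real_derivative w * p w) (at w)"
  unfolding Mp_def[abs_def]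
  by (rule indef_deriv[where q="\<lambda>y. y * p y", OF _ p_mom]) (auto intro!: continuous_intros p_cont)

lemma Lp_deriv: assumes "0 < h" "h < 1" shows "((\<lambda>h. Mp (Gp h)) has_real_derivative Gp h) (at h)"
proof -
  have "((\<lambda>h. Mp (Gp h)) has_real_derivative (Gp h * p (Gp h)) * inverse (p (Gp h))) (at h)"
    by (rule DERIV_chain2[OF Mp_deriv Gp_deriv[OF assms]]) (use Gp[OF assms] in auto)
  moreover have "(Gp h * p (Gp h)) * inverse (p (Gp h)) = Gp h"
    using p_pos[of "Gp h"] Gp[OF assms] by (simp add: field_simps)
  ultimately show ?thesis by simp
qed

lemma Fp_mono: "0 < a \<Longrightarrow> a \<le> b \<Longrightarrow> Fp a \<le> Fp b"
  using Fp_less[of a b] by (cases "a = b") auto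

definition Hp :: "real \<Rightarrow> real \<Rightarrow> real" where "Hp v x = (LBINT y:{0<..x}. (y - v) * p y)"

lemma Hp_eq: "Hp v x = Mp x - v * Fp x"
proof -
  have i1: "set_integrable lborel {0<..x} (\<lambda>y. y * p y)"
    by (rule set_integrable_subset[OF p_mom]) auto
  have i2: "set_integrable lborel {0<..x} (\<lambda>y. v * p y)"
    by (rule set_integrable_mult_right, rule set_integrable_subset[OF p_int]) auto
  have "Hp v x = (LBINT y:{0<..x}. y * p y - v * p y)"
    unfolding Hp_def by (simp add: left_diff_distrib)
  also have "\<dots> = Mp x - (LBINT y:{0<..x}. v * p y)"
    unfolding Mp_def by (rule set_integral_diff(2)[OF i1 i2])
  also have "(LBINT y:{0<..x}. v * p y) = v * Fp x"
    unfolding Fp_def by (rule set_integral_mult_right)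
  finally show ?thesis .
qed

lemma Hp_deriv: "0 < x \<Longrightarrow> (Hp v has_real_derivative (x - v) * p x) (at x)"
proof -
  assume x: "0 < x"
  have "((\<lambda>x. Mp x - v * Fp x) has_real_derivative x * p x - v * p x) (at x)"
    by (rule DERIV_diff[OF Mp_deriv[OF x] DERIV_cmult[OF Fp_deriv[OF x]]])
  then show ?thesis unfolding Hp_eq[abs_def] by (simp add: left_diff_distrib)
qed

lemma Hp_ineq:
  assumes x: "0 < x" and v: "0 < v"
  shows "\<bar>Hp v x - Hp v v\<bar> \<le> \<bar>x - v\<bar> * \<bar>Fp x - Fp v\<bar>"
proof (cases "v \<le> x")
  case True
  have h1: "Hp v v \<le> Hp v x"
  proof (rule DERIV_nonneg_imp_nondecreasing[OF True])
    fix z assume "v \<le> z" "z \<le> x"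
    then show "\<exists>y. (Hp v has_real_derivative y) (at z) \<and> 0 \<le> y"
      using Hp_deriv[of z v] v p_pos[of z] by (intro exI[of _ "(z - v) * p z"]) auto
  qed
  have h2: "(\<lambda>z. (z - v) * (Fp z - Fp v) - (Hp v z - Hp v v)) v
          \<le> (\<lambda>z. (z - v) * (Fp z - Fp v) - (Hp v z - Hp v v)) x"
  proof (rule DERIV_nonneg_imp_nondecreasing[OF True])
    fix z assume z: "v \<le> z" "z \<le> x"
    have z0: "0 < z" using z v by auto
    have "((\<lambda>z. (z - v) * (Fp z - Fp v) - (Hp v z - Hp v v)) has_real_derivative
        ((1 - 0) * (Fp z - Fp v) + (p z - 0) * (z - v)) - ((z - v) * p z - 0)) (at z)"
      by (rule DERIV_diff[OF DERIV_mult[OF DERIV_diff[OF DERIV_ident DERIV_const] DERIV_diff[OF Fp_deriv[OF z0] DERIV_const]] DERIV_diff[OF Hp_deriv[OF z0] DERIV_const]])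
    then have "((\<lambda>z. (z - v) * (Fp z - Fp v) - (Hp v z - Hp v v)) has_real_derivative
        1 * (Fp z - Fp v) + (z - v) * p z - (z - v) * p z) (at z)" by (simp add: mult.commute)
    moreover have "0 \<le> Fp z - Fp v" using Fp_mono[of v z] z v by auto
    ultimately show "\<exists>y. ((\<lambda>z. (z - v) * (Fp z - Fp v) - (Hp v z - Hp v v)) has_real_derivative y) (at z) \<and> 0 \<le> y"
      by (intro exI[of _ "1 * (Fp z - Fp v) + (z - v) * p z - (z - v) * p z"]) auto
  qed
  have "0 \<le> Fp x - Fp v" using Fp_mono[of v x] True v by auto
  then show ?thesis using h1 h2 True by (simp add: abs_mult)
next
  case False
  then have le: "x \<le> v" by simp
  have h1: "Hp v x \<ge> Hp v v"
  proof (rule DERIV_nonpos_imp_nonincreasing[OF le])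
    fix z assume "x \<le> z" "z \<le> v"
    then show "\<exists>y. (Hp v has_real_derivative y) (at z) \<and> y \<le> 0"
      using Hp_deriv[of z v] x p_pos[of z] by (intro exI[of _ "(z - v) * p z"]) (auto simp: mult_nonpos_nonneg)
  qed
  have h2: "(\<lambda>z. (z - v) * (Fp z - Fp v) - (Hp v z - Hp v v)) x
          \<ge> (\<lambda>z. (z - v) * (Fp z - Fp v) - (Hp v z - Hp v v)) v"
  proof (rule DERIV_nonpos_imp_nonincreasing[OF le])
    fix z assume z: "x \<le> z" "z \<le> v"
    have z0: "0 < z" using z x by auto
    have "((\<lambda>z. (z - v) * (Fp z - Fp v) - (Hp v z - Hp v v)) has_real_derivative
        ((1 - 0) * (Fp z - Fp v) + (p z - 0) * (z - v)) - ((z - v) * p z - 0)) (at z)"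
      by (rule DERIV_diff[OF DERIV_mult[OF DERIV_diff[OF DERIV_ident DERIV_const] DERIV_diff[OF Fp_deriv[OF z0] DERIV_const]] DERIV_diff[OF Hp_deriv[OF z0] DERIV_const]])
    then have "((\<lambda>z. (z - v) * (Fp z - Fp v) - (Hp v z - Hp v v)) has_real_derivative
        1 * (Fp z - Fp v) + (z - v) * p z - (z - v) * p z) (at z)" by (simp add: mult.commute)
    moreover have "Fp z - Fp v \<le> 0" using Fp_mono[of z v] z x by auto
    ultimately show "\<exists>y. ((\<lambda>z. (z - v) * (Fp z - Fp v) - (Hp v z - Hp v v)) has_real_derivative y) (at z) \<and> y \<le> 0"
      by (intro exI[of _ "1 * (Fp z - Fp v) + (z - v) * p z - (z - v) * p z"]) auto
  qed
  have "Fp x - Fp v \<le> 0" using Fp_mono[of x v] le x by auto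
  then have "\<bar>x - v\<bar> * \<bar>Fp x - Fp v\<bar> = (x - v) * (Fp x - Fp v)" using le
    by (simp add: abs_mult abs_of_nonpos algebra_simps)
  then show ?thesis using h1 h2 by simp
qed

lemma Gp_contf: assumes v: "0 < v" and u: "0 < u" "u < 1" shows "isCont (\<lambda>u. (min (Gp u) v)\<^sup>2) u"
  using Gp_isCont[OF u] by (intro continuous_intros)

lemma subst_lemma:
  assumes p0: "0 \<le> p 0" and v: "0 < v"
  shows "(LBINT g:{0<..<1}. (min (Gp g) v)\<^sup>2) = (LBINT x:{0<..}. (min v x)\<^sup>2 * p x)"
proof -
  have "(LBINT u=ereal 0..ereal 1. (min (Gp u) v)\<^sup>2) = (LBINT x=ereal 0..\<infinity>. p x *\<^sub>R (min (Gp (Fp x)) v)\<^sup>2)"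
  proof (rule interval_integral_substitution_integrable)
    show "ereal 0 < \<infinity>" by simp
    show "(Fp has_real_derivative p x) (at x)" if "ereal 0 < ereal x" "ereal x < \<infinity>" for x
      using that Fp_deriv by simp
    show "isCont (\<lambda>u. (min (Gp u) v)\<^sup>2) (Fp x)" if "ereal 0 < ereal x" "ereal x < \<infinity>" for x
      using that Fp_range[of x] by (intro Gp_contf v) auto
    show "isCont p x" if "ereal 0 < ereal x" "ereal x < \<infinity>" for x
      using that p_cont continuous_on_eq_continuous_at[of "{0<..}" p] by auto
    show "0 \<le> p x" if "ereal 0 \<le> ereal x" "ereal x \<le> \<infinity>" for x
      using that p0 by (cases "x = 0") auto
    show "((ereal \<circ> Fp \<circ> real_of_ereal) \<longlongrightarrow> ereal 0) (at_right (ereal 0))"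
      unfolding ereal_tendsto_simps1 ereal_tendsto_simps2 by (rule Fp_zero)
    show "((ereal \<circ> Fp \<circ> real_of_ereal) \<longlongrightarrow> ereal 1) (at_left \<infinity>)"
      unfolding ereal_tendsto_simps1 ereal_tendsto_simps2 by (rule Fp_top)
    have cpm: "continuous_on {0<..} (\<lambda>x. p x * (min x v)\<^sup>2)"
      by (intro continuous_intros p_cont)
    have i1: "set_integrable lborel {0<..} (\<lambda>x. p x * (min x v)\<^sup>2)"
    proof (rule set_integrable_bound[where f="\<lambda>x. v\<^sup>2 * p x"])
      show "set_integrable lborel {0<..} (\<lambda>x. v\<^sup>2 * p x)"
        by (rule set_integrable_mult_right[OF p_int])
      have "(\<lambda>x. indicator {0<..} x *\<^sub>R (p x * (min x v)\<^sup>2)) \<in> borel_measurable borel"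
        by (rule borel_measurable_continuous_on_indicator[OF _ cpm]) auto
      then show "set_borel_measurable lborel {0<..} (\<lambda>x. p x * (min x v)\<^sup>2)"
        unfolding set_borel_measurable_def by simp
      show "AE x in lborel. x \<in> {0<..} \<longrightarrow> norm (p x * (min x v)\<^sup>2) \<le> norm (v\<^sup>2 * p x)"
      proof (intro AE_I2 impI)
        fix x :: real assume x: "x \<in> {0<..}"
        have "(min x v)\<^sup>2 \<le> v\<^sup>2" using x v by (intro power_mono) auto
        then have "p x * (min x v)\<^sup>2 \<le> p x * v\<^sup>2" using p_pos[of x] x by (intro mult_left_mono) auto
        then show "norm (p x * (min x v)\<^sup>2) \<le> norm (v\<^sup>2 * p x)"
          using p_pos[of x] x by (simp add: abs_mult mult.commute)
      qed
    qed
    have "(\<lambda>x. indicator {0<..} x *\<^sub>R (p x *\<^sub>R (min (Gp (Fp x)) v)\<^sup>2)) =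
          (\<lambda>x. indicator {0<..} x *\<^sub>R (p x * (min x v)\<^sup>2))"
      by (auto simp: fun_eq_iff indicator_def Gp_Fp)
    then show "set_integrable lborel (einterval (ereal 0) \<infinity>) (\<lambda>x. p x *\<^sub>R (min (Gp (Fp x)) v)\<^sup>2)"
      using i1 unfolding set_integrable_def by simp
    show "set_integrable lborel (einterval (ereal 0) (ereal 1)) (\<lambda>u. (min (Gp u) v)\<^sup>2)"
    proof (rule set_integrable_bound[where f="\<lambda>x. v\<^sup>2"])
      have "set_integrable lborel {0..1} (\<lambda>x::real. v\<^sup>2)"
        by (rule borel_integrable_atLeastAtMost') (intro continuous_intros)
      then show "set_integrable lborel (einterval (ereal 0) (ereal 1)) (\<lambda>x::real. v\<^sup>2)"
        by (rule set_integrable_subset) auto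
      have "continuous_on {0<..<1} (\<lambda>u. (min (Gp u) v)\<^sup>2)"
        by (intro continuous_at_imp_continuous_on ballI Gp_contf v) auto
      then have "(\<lambda>x. indicator {0<..<1} x *\<^sub>R (min (Gp x) v)\<^sup>2) \<in> borel_measurable borel"
        by (rule borel_measurable_continuous_on_indicator[rotated]) auto
      then show "set_borel_measurable lborel (einterval (ereal 0) (ereal 1)) (\<lambda>u. (min (Gp u) v)\<^sup>2)"
        unfolding set_borel_measurable_def by simp
      show "AE x in lborel. x \<in> einterval (ereal 0) (ereal 1) \<longrightarrow> norm ((min (Gp x) v)\<^sup>2) \<le> norm (v\<^sup>2)"
      proof (intro AE_I2 impI)
        fix x :: real assume x: "x \<in> einterval (ereal 0) (ereal 1)"
        then have "0 < Gp x" using Gp[of x] by auto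
        then show "norm ((min (Gp x) v)\<^sup>2) \<le> norm (v\<^sup>2)" using v
          by (auto simp: abs_of_nonneg intro!: power_mono)
      qed
    qed
  qed
  moreover have "(LBINT u=ereal 0..ereal 1. (min (Gp u) v)\<^sup>2) = (LBINT g:{0<..<1}. (min (Gp g) v)\<^sup>2)"
    by (simp add: interval_lebesgue_integral_def)
  moreover have "(LBINT x=ereal 0..\<infinity>. p x *\<^sub>R (min (Gp (Fp x)) v)\<^sup>2) = (LBINT x:{0<..}. p x * (min (Gp (Fp x)) v)\<^sup>2)"
    by (simp add: interval_lebesgue_integral_def)
  moreover have "(LBINT x:{0<..}. p x * (min (Gp (Fp x)) v)\<^sup>2) = (LBINT x:{0<..}. (min v x)\<^sup>2 * p x)"
    by (rule set_lebesgue_integral_cong) (auto simp: Gp_Fp min.commute mult.commute)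
  ultimately show ?thesis by simp
qed

end


lemma dc_at:
  fixes s :: "real \<Rightarrow> real \<Rightarrow> real" and f w :: "real \<Rightarrow> real"
  assumes fm: "f \<in> borel_measurable lborel"
    and sm: "\<forall>\<^sub>F i in at t0. s i \<in> borel_measurable lborel"
    and wi: "integrable lborel w"
    and lim: "AE x in lborel. ((\<lambda>i. s i x) \<longlongrightarrow> f x) (at t0)"
    and bd: "\<forall>\<^sub>F i in at t0. AE x in lborel. norm (s i x) \<le> w x"
  shows "((\<lambda>i. integral\<^sup>L lborel (s i)) \<longlongrightarrow> integral\<^sup>L lborel f) (at t0)"
proof -
  have "((\<lambda>i. integral\<^sup>L lborel (s i)) \<circ> X) \<longlonglongrightarrow> integral\<^sup>L lborel f"
    if X: "\<forall>i. X i \<in> UNIV - {t0}" "X \<longlonglongrightarrow> t0" for X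
  proof -
    have fl: "filterlim X (at t0) sequentially"
      using X by (intro filterlim_atI) auto
    from filterlim_iff[THEN iffD1, OF fl, rule_format, OF eventually_conj[OF sm bd]]
    obtain N where N: "\<And>n. N \<le> n \<Longrightarrow> s (X n) \<in> borel_measurable lborel \<and>
        (AE x in lborel. norm (s (X n) x) \<le> w x)"
      by (auto simp: eventually_sequentially)
    have "(\<lambda>n. integral\<^sup>L lborel (s (X (n + N)))) \<longlonglongrightarrow> integral\<^sup>L lborel f"
    proof (rule integral_dominated_convergence[where w=w])
      show "AE x in lborel. norm (s (X (n + N)) x) \<le> w x" for n using N[of "n+N"] by auto
      show "s (X (n + N)) \<in> borel_measurable lborel" for n using N[of "n+N"] by auto
      show "AE x in lborel. (\<lambda>n. s (X (n + N)) x) \<longlonglongrightarrow> f x"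
        using lim
      proof eventually_elim
        fix x assume "((\<lambda>i. s i x) \<longlongrightarrow> f x) (at t0)"
        then have "(\<lambda>n. s (X n) x) \<longlonglongrightarrow> f x" by (rule filterlim_compose[OF _ fl])
        then show "(\<lambda>n. s (X (n + N)) x) \<longlonglongrightarrow> f x" by (rule LIMSEQ_ignore_initial_segment)
      qed
    qed (use fm wi in auto)
    then show ?thesis unfolding comp_def by (rule LIMSEQ_offset)
  qed
  then show ?thesis unfolding tendsto_at_iff_sequentially[where s=UNIV] by blast
qed


locale ysm =
  fixes \<rho> \<rho>t :: "real \<Rightarrow> real \<Rightarrow> real" and t :: real
  assumes pos: "\<And>w s. 0 < w \<Longrightarrow> 0 \<le> s \<Longrightarrow> 0 < \<rho> w s"
    and mass: "\<And>s. 0 \<le> s \<Longrightarrow> set_integrable lborel {0<..} (\<lambda>x. \<rho> x s)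
                   \<and> (LBINT x:{0<..}. \<rho> x s) = 1"
    and moment: "\<And>s. 0 \<le> s \<Longrightarrow> set_integrable lborel {0<..} (\<lambda>x. x * \<rho> x s)
                   \<and> (LBINT x:{0<..}. x * \<rho> x s) = 1"
    and cont: "continuous_on ({0<..} \<times> {0..}) (\<lambda>(w, s). \<rho> w s)"
    and deriv_t: "\<And>w s. 0 < w \<Longrightarrow> 0 < s \<Longrightarrow> ((\<lambda>r. \<rho> w r) has_real_derivative \<rho>t w s) (at s)"
    and cont_t: "continuous_on ({0<..} \<times> {0<..}) (\<lambda>(w, s). \<rho>t w s)"
    and dom: "\<And>s. 0 < s \<Longrightarrow> \<exists>e>0. \<exists>g. set_integrable lborel {0<..} g \<and>
                 (\<forall>r\<in>{s - e<..<s + e}. \<forall>w>0. \<bar>\<rho>t w r\<bar> \<le> g w \<and> \<bar>w * \<rho>t w r\<bar> \<le> g w)"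
    and t_pos: "0 < t"
begin

lemma cont_s: "0 \<le> s \<Longrightarrow> continuous_on {0<..} (\<lambda>y. \<rho> y s)"
proof -
  assume s: "0 \<le> s"
  have "continuous_on {0<..} (\<lambda>y::real. (y, s))" by (intro continuous_intros)
  moreover have "(\<lambda>y. (y, s)) ` {0<..} \<subseteq> {0<..} \<times> {0..}" using s by auto
  ultimately show ?thesis using continuous_on_compose2[OF cont, of "{0<..}" "\<lambda>y. (y, s)"] by simp
qed

lemma cont_t_s: "0 < s \<Longrightarrow> continuous_on {0<..} (\<lambda>y. \<rho>t y s)"
proof -
  assume s: "0 < s"
  have "continuous_on {0<..} (\<lambda>y::real. (y, s))" by (intro continuous_intros)
  moreover have "(\<lambda>y. (y, s)) ` {0<..} \<subseteq> {0<..} \<times> {0<..}" using s by auto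
  ultimately show ?thesis using continuous_on_compose2[OF cont_t, of "{0<..}" "\<lambda>y. (y, s)"] by simp
qed

lemma dens_s: "0 \<le> s \<Longrightarrow> dens (\<lambda>y. \<rho> y s)"
  using pos mass moment cont_s by unfold_locales auto

lemma rho_meas: "0 \<le> s \<Longrightarrow> (\<lambda>x. indicator {0<..} x * \<rho> x s) \<in> borel_measurable lborel"
  using mass[of s] unfolding set_integrable_def by auto

lemma rhot_meas: "0 < s \<Longrightarrow> (\<lambda>x. indicator {0<..} x * \<rho>t x s) \<in> borel_measurable lborel"
  using borel_measurable_continuous_on_indicator[OF _ cont_t_s] by auto

lemma mvt_bound_lt:
  assumes "0 < y" "0 < a" "a < b" "\<And>r. a \<le> r \<Longrightarrow> r \<le> b \<Longrightarrow> \<bar>\<rho>t y r\<bar> \<le> G"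
  shows "\<bar>\<rho> y b - \<rho> y a\<bar> \<le> G * \<bar>b - a\<bar>"
proof -
  obtain z where z: "a < z" "z < b" "\<rho> y b - \<rho> y a = (b - a) * \<rho>t y z"
    using MVT2[where f="\<lambda>r. \<rho> y r" and f'="\<rho>t y", OF assms(3)] deriv_t assms by force
  have "\<bar>\<rho> y b - \<rho> y a\<bar> = (b - a) * \<bar>\<rho>t y z\<bar>" using z assms by (simp add: abs_mult)
  also have "\<dots> \<le> (b - a) * G" using assms(3) assms(4)[of z] z by (intro mult_left_mono) auto
  finally show ?thesis using assms by (simp add: mult.commute)
qed

lemma mvt_bound:
  assumes "0 < y" "0 < a" "0 < b" "\<And>r. min a b \<le> r \<Longrightarrow> r \<le> max a b \<Longrightarrow> \<bar>\<rho>t y r\<bar> \<le> G"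
  shows "\<bar>\<rho> y b - \<rho> y a\<bar> \<le> G * \<bar>b - a\<bar>"
proof (cases a b rule: linorder_cases)
  case less
  then show ?thesis using mvt_bound_lt[of y a b G] assms by auto
next
  case equal
  then show ?thesis by simp
next
  case greater
  then show ?thesis using mvt_bound_lt[of y b a G] assms by (auto simp: abs_minus_commute)
qed


lemma ev_pos: "\<forall>\<^sub>F s in at t. 0 < s"
  using order_tendstoD(1)[OF tendsto_ident_at t_pos] .

lemma tderiv:
  assumes W: "0 < W" and qm: "q \<in> borel_measurable lborel"
    and qb: "\<And>y. 0 < y \<Longrightarrow> y \<le> W \<Longrightarrow> \<bar>q y\<bar> \<le> C"
  shows "((\<lambda>s. LBINT y:{0<..W}. q y * \<rho> y s) has_real_derivative
           (LBINT y:{0<..W}. q y * \<rho>t y t)) (at t)"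
proof -
  have C: "0 \<le> C" using qb[of W] W by auto
  obtain e g where e: "0 < e" and gi: "set_integrable lborel {0<..} g"
    and gb: "\<And>r w. r \<in> {t - e<..<t + e} \<Longrightarrow> 0 < w \<Longrightarrow> \<bar>\<rho>t w r\<bar> \<le> g w"
    using dom[OF t_pos] by blast
  define e' where "e' = min e t"
  have e': "0 < e'" "e' \<le> e" "e' \<le> t" using e t_pos by (auto simp: e'_def)
  define I where "I s = (LBINT y:{0<..W}. q y * \<rho> y s)" for s
  define S where "S s y = (indicator {0<..W} y * (q y * \<rho> y s) - indicator {0<..W} y * (q y * \<rho> y t)) / (s - t)" for s y
  have meas: "(\<lambda>y. indicator {0<..W} y * (q y * \<rho> y s)) \<in> borel_measurable lborel" if "0 \<le> s" for s
  proof -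
    have "(\<lambda>y. indicator {0<..W} y * (q y * \<rho> y s)) = (\<lambda>y. indicator {..W} y * q y * (indicator {0<..} y * \<rho> y s))"
      by (auto simp: fun_eq_iff indicator_def)
    then show ?thesis using rho_meas[OF that] qm by simp
  qed
  have int: "integrable lborel (\<lambda>y. indicator {0<..W} y * (q y * \<rho> y s))" if "0 \<le> s" for s
  proof (rule Bochner_Integration.integrable_bound[where f="\<lambda>y. C * (indicator {0<..} y * \<rho> y s)"])
    show "integrable lborel (\<lambda>y. C * (indicator {0<..} y * \<rho> y s))"
      using mass[OF that] unfolding set_integrable_def by simp
    show "(\<lambda>y. indicator {0<..W} y * (q y * \<rho> y s)) \<in> borel_measurable lborel" using meas[OF that] .
    show "AE x in lborel. norm (indicator {0<..W} x * (q x * \<rho> x s)) \<le> norm (C * (indicator {0<..} x * \<rho> x s))"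
    proof (rule AE_I2)
      fix x :: real
      show "norm (indicator {0<..W} x * (q x * \<rho> x s)) \<le> norm (C * (indicator {0<..} x * \<rho> x s))"
      proof (cases "0 < x \<and> x \<le> W")
        case True
        then have "\<bar>q x\<bar> * \<rho> x s \<le> C * \<rho> x s" using qb[of x] pos[of x s] that
          by (intro mult_right_mono) auto
        then show ?thesis using True pos[of x s] that C by (simp add: indicator_def abs_mult)
      next
        case False
        then show ?thesis by (auto simp: indicator_def)
      qed
    qed
  qed
  have quot: "(I s - I t) / (s - t) = integral\<^sup>L lborel (S s)" if "0 < s" for s
    unfolding I_def S_def set_lebesgue_integral_def using int[of s] int[of t] that t_pos
    by (simp add: Bochner_Integration.integral_diff)
  have lim: "((\<lambda>s. integral\<^sup>L lborel (S s)) \<longlongrightarrow>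
      integral\<^sup>L lborel (\<lambda>y. indicator {0<..W} y * (q y * \<rho>t y t))) (at t)"
  proof (rule dc_at[where w="\<lambda>y. C * \<bar>indicator {0<..} y * g y\<bar>"])
    have "(\<lambda>y. indicator {0<..W} y * (q y * \<rho>t y t)) = (\<lambda>y. indicator {..W} y * q y * (indicator {0<..} y * \<rho>t y t))"
      by (auto simp: fun_eq_iff indicator_def)
    then show "(\<lambda>y. indicator {0<..W} y * (q y * \<rho>t y t)) \<in> borel_measurable lborel"
      using rhot_meas[OF t_pos] qm by simp
    show "\<forall>\<^sub>F s in at t. S s \<in> borel_measurable lborel"
      using ev_pos
    proof eventually_elim
      case (elim s)
      then show ?case unfolding S_def
        by (intro borel_measurable_divide borel_measurable_diff meas) (use t_pos in auto)
    qed
    show "integrable lborel (\<lambda>y. C * \<bar>indicator {0<..} y * g y\<bar>)"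
      using gi unfolding set_integrable_def by (intro integrable_mult_right integrable_abs) auto
    show "AE y in lborel. ((\<lambda>s. S s y) \<longlongrightarrow> indicator {0<..W} y * (q y * \<rho>t y t)) (at t)"
    proof (rule AE_I2)
      fix y :: real
      show "((\<lambda>s. S s y) \<longlongrightarrow> indicator {0<..W} y * (q y * \<rho>t y t)) (at t)"
      proof (cases "0 < y \<and> y \<le> W")
        case True
        have d: "((\<lambda>s. (\<rho> y s - \<rho> y t) / (s - t)) \<longlongrightarrow> \<rho>t y t) (at t)"
          using deriv_t[of y t] True t_pos by (simp add: has_field_derivative_iff)
        have "((\<lambda>s. q y * ((\<rho> y s - \<rho> y t) / (s - t))) \<longlongrightarrow> q y * \<rho>t y t) (at t)"
          by (intro tendsto_mult_left d)
        moreover have "(\<lambda>s. S s y) = (\<lambda>s. q y * ((\<rho> y s - \<rho> y t) / (s - t)))"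
          using True by (simp add: S_def indicator_def fun_eq_iff right_diff_distrib)
        ultimately show ?thesis using True by (simp add: indicator_def)
      next
        case False
        then have "(\<lambda>s. S s y) = (\<lambda>s. 0)" by (auto simp: S_def indicator_def fun_eq_iff)
        moreover have "indicator {0<..W} y * (q y * \<rho>t y t) = 0" using False by (auto simp: indicator_def)
        ultimately show ?thesis by (metis tendsto_const)
      qed
    qed
    have "\<forall>\<^sub>F s in at t. t - e' < s \<and> s < t + e'"
      using order_tendstoD(1)[OF tendsto_ident_at, of "t - e'" t] order_tendstoD(2)[OF tendsto_ident_at, of t "t + e'"] e'
      by (auto intro: eventually_conj)
    then show "\<forall>\<^sub>F s in at t. AE y in lborel. norm (S s y) \<le> C * \<bar>indicator {0<..} y * g y\<bar>"
    proof eventually_elim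
      case (elim s)
      show ?case
      proof (rule AE_I2)
        fix y :: real
        show "norm (S s y) \<le> C * \<bar>indicator {0<..} y * g y\<bar>"
        proof (cases "0 < y \<and> y \<le> W \<and> s \<noteq> t")
          case True
          have s0: "0 < s" using elim e' by auto
          have b: "\<bar>\<rho> y s - \<rho> y t\<bar> \<le> g y * \<bar>s - t\<bar>"
          proof (rule mvt_bound)
            fix r assume "min t s \<le> r" "r \<le> max t s"
            then have "r \<in> {t - e<..<t + e}" using elim e' by (auto simp: min_def max_def split: if_splits)
            then show "\<bar>\<rho>t y r\<bar> \<le> g y" using gb True by auto
          qed (use True s0 t_pos in auto)
          have "\<bar>q y\<bar> * \<bar>\<rho> y s - \<rho> y t\<bar> \<le> C * (g y * \<bar>s - t\<bar>)"
            by (rule mult_mono) (use qb True b C in auto)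
          then have "\<bar>q y\<bar> * \<bar>\<rho> y s - \<rho> y t\<bar> / \<bar>s - t\<bar> \<le> C * g y"
            using True by (simp add: field_simps)
          moreover have "norm (S s y) = \<bar>q y\<bar> * \<bar>\<rho> y s - \<rho> y t\<bar> / \<bar>s - t\<bar>"
            using True by (simp add: S_def indicator_def abs_mult right_diff_distrib[symmetric])
          moreover have "C * g y \<le> C * \<bar>indicator {0<..} y * g y\<bar>"
            using True C by (intro mult_left_mono) (auto simp: indicator_def)
          ultimately show ?thesis by linarith
        next
          case False
          then have "S s y = 0" by (auto simp: S_def indicator_def)
          then show ?thesis using C by simp
        qed
      qed
    qed
  qed
  have "((\<lambda>s. (I s - I t) / (s - t)) \<longlongrightarrow> integral\<^sup>L lborel (\<lambda>y. indicator {0<..W} y * (q y * \<rho>t y t))) (at t)"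
    by (rule Lim_transform_eventually[OF lim]) (use ev_pos quot in \<open>auto elim: eventually_mono\<close>)
  then show ?thesis
    unfolding has_field_derivative_iff I_def by (simp add: set_lebesgue_integral_def)
qed


lemma F_eq: "0 \<le> s \<Longrightarrow> ysm_F \<rho> w s = dens.Fp (\<lambda>y. \<rho> y s) w"
proof -
  assume "0 \<le> s"
  then interpret ds: dens "\<lambda>y. \<rho> y s" by (rule dens_s)
  show ?thesis by (simp add: ysm_F_def ds.Fp_def)
qed

lemma G_eq: "0 \<le> s \<Longrightarrow> ysm_G \<rho> f s = dens.Gp (\<lambda>y. \<rho> y s) f"
proof -
  assume s: "0 \<le> s"
  then interpret ds: dens "\<lambda>y. \<rho> y s" by (rule dens_s)
  show ?thesis by (simp add: ysm_G_def ds.Gp_def F_eq[OF s])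
qed

lemma L_eq: "0 \<le> s \<Longrightarrow> lorenz \<rho> f s = dens.Mp (\<lambda>y. \<rho> y s) (ysm_G \<rho> f s)"
proof -
  assume s: "0 \<le> s"
  then interpret ds: dens "\<lambda>y. \<rho> y s" by (rule dens_s)
  show ?thesis by (simp add: lorenz_def ds.Mp_def)
qed

lemma G_props: "0 \<le> s \<Longrightarrow> 0 < f \<Longrightarrow> f < 1 \<Longrightarrow> 0 < ysm_G \<rho> f s \<and> ysm_F \<rho> (ysm_G \<rho> f s) s = f"
  using dens.Gp[OF dens_s] by (simp add: F_eq G_eq)

lemma F_tderiv: "0 < w \<Longrightarrow> ((\<lambda>s. ysm_F \<rho> w s) has_real_derivative (LBINT y:{0<..w}. \<rho>t y t)) (at t)"
  using tderiv[of w "\<lambda>y. 1" 1] by (simp add: ysm_F_def)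

lemma G_cont:
  assumes f: "0 < f" "f < 1"
  shows "((\<lambda>s. ysm_G \<rho> f s) \<longlongrightarrow> ysm_G \<rho> f t) (at t)"
proof (rule tendstoI)
  fix \<epsilon> :: real assume \<epsilon>: "0 < \<epsilon>"
  have t0: "0 \<le> t" using t_pos by simp
  define v where "v = ysm_G \<rho> f t"
  have v: "0 < v" "ysm_F \<rho> v t = f" using G_props[of t f] f t_pos by (auto simp: v_def)
  define \<delta> where "\<delta> = min \<epsilon> (v/2)"
  have \<delta>: "0 < \<delta>" "\<delta> \<le> \<epsilon>" "0 < v - \<delta>" using \<epsilon> v by (auto simp: \<delta>_def)
  interpret dt: dens "\<lambda>y. \<rho> y t" using dens_s t_pos by auto
  have a: "ysm_F \<rho> (v - \<delta>) t < f" using dt.Fp_less[of "v - \<delta>" v] v \<delta> by (simp add: F_eq[OF t0])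
  have b: "f < ysm_F \<rho> (v + \<delta>) t" using dt.Fp_less[of v "v + \<delta>"] v \<delta> by (simp add: F_eq[OF t0])
  have ca: "((\<lambda>s. ysm_F \<rho> (v - \<delta>) s) \<longlongrightarrow> ysm_F \<rho> (v - \<delta>) t) (at t)"
    using F_tderiv[of "v - \<delta>"] \<delta> DERIV_isCont isCont_def by blast
  have cb: "((\<lambda>s. ysm_F \<rho> (v + \<delta>) s) \<longlongrightarrow> ysm_F \<rho> (v + \<delta>) t) (at t)"
    using F_tderiv[of "v + \<delta>"] \<delta> v DERIV_isCont isCont_def by (smt (verit))
  have "\<forall>\<^sub>F s in at t. 0 < s \<and> ysm_F \<rho> (v - \<delta>) s < f \<and> f < ysm_F \<rho> (v + \<delta>) s"
    using ev_pos order_tendstoD(2)[OF ca a] order_tendstoD(1)[OF cb b] by (auto intro: eventually_conj)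
  then show "\<forall>\<^sub>F s in at t. dist (ysm_G \<rho> f s) (ysm_G \<rho> f t) < \<epsilon>"
  proof eventually_elim
    case (elim s)
    interpret ds: dens "\<lambda>y. \<rho> y s" using dens_s elim by auto
    have s0: "0 \<le> s" using elim by auto
    have g: "0 < ysm_G \<rho> f s" "ysm_F \<rho> (ysm_G \<rho> f s) s = f" using G_props[of s f] elim f by auto
    have "v - \<delta> < ysm_G \<rho> f s"
    proof (rule ccontr)
      assume "\<not> v - \<delta> < ysm_G \<rho> f s"
      then have "ysm_F \<rho> (ysm_G \<rho> f s) s \<le> ysm_F \<rho> (v - \<delta>) s"
        using ds.Fp_mono[of "ysm_G \<rho> f s" "v - \<delta>"] g by (simp add: F_eq[OF s0])
      then show False using g elim by simp
    qed
    moreover have "ysm_G \<rho> f s < v + \<delta>"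
    proof (rule ccontr)
      assume "\<not> ysm_G \<rho> f s < v + \<delta>"
      then have "ysm_F \<rho> (v + \<delta>) s \<le> ysm_F \<rho> (ysm_G \<rho> f s) s"
        using ds.Fp_mono[of "v + \<delta>" "ysm_G \<rho> f s"] \<delta> v by (simp add: F_eq[OF s0])
      then show False using g elim by simp
    qed
    ultimately show ?case using \<delta> unfolding v_def dist_real_def by auto
  qed
qed


lemma L_tderiv:
  assumes f: "0 < f" "f < 1"
  shows "((\<lambda>s. lorenz \<rho> f s) has_real_derivative
     (LBINT y:{0<..ysm_G \<rho> f t}. (y - ysm_G \<rho> f t) * \<rho>t y t)) (at t)"
proof -
  have t0: "0 \<le> t" using t_pos by simp
  define v where "v = ysm_G \<rho> f t"
  have v: "0 < v" "ysm_F \<rho> v t = f" using G_props[OF t0 f] by (auto simp: v_def)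
  define H where "H s x = (LBINT y:{0<..x}. (y - v) * \<rho> y s)" for s x
  define D where "D = (LBINT y:{0<..v}. (y - v) * \<rho>t y t)"
  define F' where "F' = (LBINT y:{0<..v}. \<rho>t y t)"
  have Lrep: "lorenz \<rho> f s = H s (ysm_G \<rho> f s) + v * f" if "0 \<le> s" for s
  proof -
    interpret ds: dens "\<lambda>y. \<rho> y s" using dens_s that by auto
    have "H s (ysm_G \<rho> f s) = ds.Mp (ysm_G \<rho> f s) - v * ds.Fp (ysm_G \<rho> f s)"
      using ds.Hp_eq unfolding H_def ds.Hp_def by simp
    moreover have "ds.Fp (ysm_G \<rho> f s) = f" using G_props[OF that f] F_eq[OF that] by simp
    ultimately show ?thesis using L_eq[OF that] by simp
  qed
  have ineq: "\<bar>H s (ysm_G \<rho> f s) - H s v\<bar> \<le> \<bar>ysm_G \<rho> f s - v\<bar> * \<bar>ysm_F \<rho> v s - ysm_F \<rho> v t\<bar>"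
    if "0 < s" for s
  proof -
    interpret ds: dens "\<lambda>y. \<rho> y s" using dens_s that by auto
    have g: "0 < ysm_G \<rho> f s" "ysm_F \<rho> (ysm_G \<rho> f s) s = f" using G_props[of s f] that f by auto
    have "\<bar>ds.Hp v (ysm_G \<rho> f s) - ds.Hp v v\<bar> \<le> \<bar>ysm_G \<rho> f s - v\<bar> * \<bar>ds.Fp (ysm_G \<rho> f s) - ds.Fp v\<bar>"
      by (rule ds.Hp_ineq) (use g v in auto)
    moreover have "ds.Fp (ysm_G \<rho> f s) = ysm_F \<rho> v t" using g v F_eq[of s] that by simp
    moreover have "ds.Fp v = ysm_F \<rho> v s" using F_eq[of s] that by simp
    ultimately show ?thesis unfolding H_def ds.Hp_def by (simp add: abs_minus_commute)
  qed
  have T2: "((\<lambda>s. (H s v - H t v) / (s - t)) \<longlongrightarrow> D) (at t)"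
  proof -
    have "((\<lambda>s. LBINT y:{0<..v}. (y - v) * \<rho> y s) has_real_derivative D) (at t)"
      unfolding D_def by (rule tderiv[where C=v]) (use v in auto)
    then show ?thesis unfolding has_field_derivative_iff H_def .
  qed
  have Fd: "((\<lambda>s. (ysm_F \<rho> v s - ysm_F \<rho> v t) / (s - t)) \<longlongrightarrow> F') (at t)"
    using F_tderiv[OF v(1)] unfolding has_field_derivative_iff F'_def .
  have Gc: "((\<lambda>s. ysm_G \<rho> f s - v) \<longlongrightarrow> 0) (at t)"
    using G_cont[OF f] unfolding v_def by (simp add: LIM_zero)
  have T1: "((\<lambda>s. (H s (ysm_G \<rho> f s) - H s v) / (s - t)) \<longlongrightarrow> 0) (at t)"
  proof (rule Lim_null_comparison)
    show "\<forall>\<^sub>F s in at t. norm ((H s (ysm_G \<rho> f s) - H s v) / (s - t))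
        \<le> \<bar>ysm_G \<rho> f s - v\<bar> * \<bar>(ysm_F \<rho> v s - ysm_F \<rho> v t) / (s - t)\<bar>"
      using ev_pos
    proof eventually_elim
      case (elim s)
      have "\<bar>H s (ysm_G \<rho> f s) - H s v\<bar> / \<bar>s - t\<bar>
          \<le> \<bar>ysm_G \<rho> f s - v\<bar> * \<bar>ysm_F \<rho> v s - ysm_F \<rho> v t\<bar> / \<bar>s - t\<bar>"
        using ineq[OF elim] by (intro divide_right_mono) auto
      then show ?case by (simp add: abs_divide)
    qed
    have "((\<lambda>s. \<bar>ysm_G \<rho> f s - v\<bar> * \<bar>(ysm_F \<rho> v s - ysm_F \<rho> v t) / (s - t)\<bar>) \<longlongrightarrow> \<bar>0\<bar> * \<bar>F'\<bar>) (at t)"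
      by (intro tendsto_intros Gc Fd)
    then show "((\<lambda>s. \<bar>ysm_G \<rho> f s - v\<bar> * \<bar>(ysm_F \<rho> v s - ysm_F \<rho> v t) / (s - t)\<bar>) \<longlongrightarrow> 0) (at t)"
      by simp
  qed
  have "((\<lambda>s. (H s (ysm_G \<rho> f s) - H s v) / (s - t) + (H s v - H t v) / (s - t)) \<longlongrightarrow> 0 + D) (at t)"
    by (intro tendsto_add T1 T2)
  then have lim: "((\<lambda>s. (H s (ysm_G \<rho> f s) - H s v) / (s - t) + (H s v - H t v) / (s - t)) \<longlongrightarrow> D) (at t)"
    by simp
  have ev: "\<forall>\<^sub>F s in at t. (H s (ysm_G \<rho> f s) - H s v) / (s - t) + (H s v - H t v) / (s - t) =
        (lorenz \<rho> f s - lorenz \<rho> f t) / (s - t)"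
    using ev_pos
  proof eventually_elim
    case (elim s)
    have "lorenz \<rho> f t = H t v + v * f" using Lrep[OF t0] by (simp add: v_def)
    then show ?case using Lrep[of s] elim by (simp add: add_divide_distrib[symmetric])
  qed
  have "((\<lambda>s. (lorenz \<rho> f s - lorenz \<rho> f t) / (s - t)) \<longlongrightarrow> D) (at t)"
    by (rule Lim_transform_eventually[OF lim ev])
  then show ?thesis unfolding has_field_derivative_iff D_def v_def .
qed

end

lemma ftc_part:
  fixes P J r :: "real \<Rightarrow> real"
  assumes v: "0 < v"
    and dP: "\<And>y. 0 < y \<Longrightarrow> (P has_real_derivative J y) (at y)"
    and dJ: "\<And>y. 0 < y \<Longrightarrow> (J has_real_derivative r y) (at y)"
    and cr: "continuous_on {0<..} r"
    and ir: "set_integrable lborel {0<..v} r"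
    and P0: "(P \<longlongrightarrow> 0) (at_right 0)"
    and J0: "(J \<longlongrightarrow> 0) (at_right 0)"
  shows "(LBINT y:{0<..v}. (y - v) * r y) = - P v"
proof -
  define F where "F y = (y - v) * J y - P y" for y
  have dF: "(F has_real_derivative (y - v) * r y) (at y)" if "0 < y" for y
  proof -
    have "(F has_real_derivative ((1 - 0) * J y + r y * (y - v)) - J y) (at y)"
      unfolding F_def[abs_def]
      by (rule DERIV_diff[OF DERIV_mult[OF DERIV_diff[OF DERIV_ident DERIV_const] dJ[OF that]] dP[OF that]])
    then show ?thesis by (simp add: algebra_simps)
  qed
  have cf: "continuous_on {0<..} (\<lambda>y. (y - v) * r y)"
    by (intro continuous_intros cr)
  have "(LBINT y=ereal 0..ereal v. (y - v) * r y) = F v - 0"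
  proof (rule interval_integral_FTC_integrable)
    show "ereal 0 < ereal v" using v by simp
    show "(F has_vector_derivative (x - v) * r x) (at x)" if "ereal 0 < ereal x" "ereal x < ereal v" for x
      using dF[of x] that by (simp add: has_real_derivative_iff_has_vector_derivative)
    show "isCont (\<lambda>y. (y - v) * r y) x" if "ereal 0 < ereal x" "ereal x < ereal v" for x
      using cf that continuous_on_eq_continuous_at[of "{0<..}" "\<lambda>y. (y - v) * r y"] by auto
    show "set_integrable lborel (einterval (ereal 0) (ereal v)) (\<lambda>y. (y - v) * r y)"
    proof (rule set_integrable_bound[where f="\<lambda>y. v * r y"])
      show "set_integrable lborel (einterval (ereal 0) (ereal v)) (\<lambda>y. v * r y)"
        by (rule set_integrable_mult_right, rule set_integrable_subset[OF ir]) (auto simp: einterval_iff)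
      have "(\<lambda>x. indicator {0<..} x *\<^sub>R ((x - v) * r x)) \<in> borel_measurable borel"
        by (rule borel_measurable_continuous_on_indicator[OF _ cf]) auto
      then have "(\<lambda>x. indicator {..<v} x * (indicator {0<..} x *\<^sub>R ((x - v) * r x))) \<in> borel_measurable borel"
        by measurable
      moreover have "(\<lambda>x. indicator {..<v} x * (indicator {0<..} x *\<^sub>R ((x - v) * r x))) =
          (\<lambda>x. indicator (einterval (ereal 0) (ereal v)) x *\<^sub>R ((x - v) * r x))"
        by (auto simp: fun_eq_iff indicator_def einterval_iff)
      ultimately show "set_borel_measurable lborel (einterval (ereal 0) (ereal v)) (\<lambda>y. (y - v) * r y)"
        unfolding set_borel_measurable_def by simp
      show "AE x in lborel. x \<in> einterval (ereal 0) (ereal v) \<longrightarrow> norm ((x - v) * r x) \<le> norm (v * r x)"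
        using v by (intro AE_I2) (auto simp: einterval_iff abs_mult intro!: mult_right_mono)
    qed
    show "((F \<circ> real_of_ereal) \<longlongrightarrow> 0) (at_right (ereal 0))"
    proof -
      have "((\<lambda>y. (y - v) * J y - P y) \<longlongrightarrow> (0 - v) * 0 - 0) (at_right 0)"
        by (intro tendsto_intros J0 P0)
      then show ?thesis unfolding ereal_tendsto_simps1 F_def by simp
    qed
    show "((F \<circ> real_of_ereal) \<longlongrightarrow> F v) (at_left (ereal v))"
    proof -
      have "isCont F v" using dF[OF v] by (rule DERIV_isCont)
      then have "(F \<longlongrightarrow> F v) (at v)" by (simp add: isCont_def)
      then have "(F \<longlongrightarrow> F v) (at_left v)" by (simp add: filterlim_at_split)
      then show ?thesis unfolding ereal_tendsto_simps1 .
    qed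
  qed
  moreover have "(LBINT y=ereal 0..ereal v. (y - v) * r y) = (LBINT y:{0<..v}. (y - v) * r y)"
    using v by (intro interval_integral_Ioc) auto
  ultimately show ?thesis by (simp add: F_def)
qed


theorem mainTheorem2:
  fixes \<gamma> :: real
    and \<rho> \<rho>t J1 :: "real \<Rightarrow> real \<Rightarrow> real"
    and f t :: real
  assumes gamma: "0 < \<gamma>" "\<gamma> < 1"
    and pos: "\<And>w s. 0 < w \<Longrightarrow> 0 \<le> s \<Longrightarrow> 0 < \<rho> w s"
    and init_mass: "set_integrable lborel {0<..} (\<lambda>x. \<rho> x 0)"
        "(LBINT x:{0<..}. \<rho> x 0) = 1"
    and init_moment: "set_integrable lborel {0<..} (\<lambda>x. x * \<rho> x 0)"
        "(LBINT x:{0<..}. x * \<rho> x 0) = 1"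
    and mass: "\<And>s. 0 \<le> s \<Longrightarrow> set_integrable lborel {0<..} (\<lambda>x. \<rho> x s)
                   \<and> (LBINT x:{0<..}. \<rho> x s) = 1"
    and moment: "\<And>s. 0 \<le> s \<Longrightarrow> set_integrable lborel {0<..} (\<lambda>x. x * \<rho> x s)
                   \<and> (LBINT x:{0<..}. x * \<rho> x s) = 1"
    and cont: "continuous_on ({0<..} \<times> {0..}) (\<lambda>(w, s). \<rho> w s)"
    and deriv_t: "\<And>w s. 0 < w \<Longrightarrow> 0 < s \<Longrightarrow> ((\<lambda>r. \<rho> w r) has_real_derivative \<rho>t w s) (at s)"
    and cont_t: "continuous_on ({0<..} \<times> {0<..}) (\<lambda>(w, s). \<rho>t w s)"
    and flux: "\<And>w s. 0 < w \<Longrightarrow> 0 < s \<Longrightarrow>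
                 ((\<lambda>v. ysm_D \<gamma> \<rho> v s * \<rho> v s) has_real_derivative J1 w s) (at w)"
    and pde: "\<And>w s. 0 < w \<Longrightarrow> 0 < s \<Longrightarrow> ((\<lambda>v. J1 v s) has_real_derivative \<rho>t w s) (at w)"
    and bc_zero: "\<And>s. 0 < s \<Longrightarrow> \<rho> 0 s = 0"
    and bc_inf: "\<And>s. 0 < s \<Longrightarrow> ((\<lambda>w. \<rho> w s) \<longlongrightarrow> 0) at_top"
    and bd1: "\<And>s. 0 < s \<Longrightarrow> ((\<lambda>w. ysm_D \<gamma> \<rho> w s * \<rho> w s) \<longlongrightarrow> 0) (at_right 0)"
    and bd2: "\<And>s. 0 < s \<Longrightarrow> ((\<lambda>w. w * J1 w s) \<longlongrightarrow> 0) (at_right 0)"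
    and bd3: "\<And>s. 0 < s \<Longrightarrow> ((\<lambda>w. J1 w s) \<longlongrightarrow> 0) (at_right 0)"
    and dom: "\<And>s. 0 < s \<Longrightarrow> \<exists>e>0. \<exists>g. set_integrable lborel {0<..} g \<and>
                 (\<forall>r\<in>{s - e<..<s + e}. \<forall>w>0. \<bar>\<rho>t w r\<bar> \<le> g w \<and> \<bar>w * \<rho>t w r\<bar> \<le> g w)"
    and f: "0 < f" "f < 1"
    and t: "0 < t"
  shows "(\<lambda>s. lorenz \<rho> f s) differentiable (at t)
      \<and> (\<forall>g\<in>{0<..<1}. (\<lambda>h. lorenz \<rho> h t) differentiable (at g))
      \<and> (\<lambda>g. deriv (\<lambda>h. lorenz \<rho> h t) g) differentiable (at f)
      \<and> deriv (\<lambda>s. lorenz \<rho> f s) t =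
          - (1 / deriv (\<lambda>g. deriv (\<lambda>h. lorenz \<rho> h t) g) f)
            * (\<gamma> / 2 * (LBINT g:{0<..<1}.
                 (min (deriv (\<lambda>h. lorenz \<rho> h t) g) (deriv (\<lambda>h. lorenz \<rho> h t) f))\<^sup>2))"
proof -
  interpret Y: ysm \<rho> \<rho>t t
    using pos mass moment cont deriv_t cont_t dom t by unfold_locales auto
  have t0: "0 \<le> t" using t by simp
  interpret dt: dens "\<lambda>y. \<rho> y t" by (rule Y.dens_s[OF t0])
  have Lt_eq: "(\<lambda>h. lorenz \<rho> h t) = (\<lambda>h. dt.Mp (dt.Gp h))"
    using Y.L_eq[OF t0] Y.G_eq[OF t0] by (simp add: fun_eq_iff)
  have Ld: "((\<lambda>h. lorenz \<rho> h t) has_real_derivative dt.Gp g) (at g)" if "0 < g" "g < 1" for g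
    unfolding Lt_eq by (rule dt.Lp_deriv[OF that])
  have dL: "deriv (\<lambda>h. lorenz \<rho> h t) g = dt.Gp g" if "0 < g" "g < 1" for g
    by (rule DERIV_imp_deriv[OF Ld[OF that]])
  define w0 where "w0 = dt.Gp f"
  have w0: "0 < w0" using dt.Gp[OF f] by (simp add: w0_def)
  have w0G: "ysm_G \<rho> f t = w0" using Y.G_eq[OF t0] by (simp add: w0_def)
  have Gd: "((\<lambda>g. deriv (\<lambda>h. lorenz \<rho> h t) g) has_real_derivative inverse (\<rho> w0 t)) (at f)"
  proof (rule has_field_derivative_transform_within_open[where S="{0<..<1}"])
    show "(dt.Gp has_real_derivative inverse (\<rho> w0 t)) (at f)"
      using dt.Gp_deriv[OF f] by (simp add: w0_def)
  qed (use f dL in auto)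
  have Td: "((\<lambda>s. lorenz \<rho> f s) has_real_derivative
     (LBINT y:{0<..w0}. (y - w0) * \<rho>t y t)) (at t)"
    using Y.L_tderiv[OF f] by (simp add: w0G)
  obtain e g where gi: "set_integrable lborel {0<..} g"
    and gb: "\<And>r w. r \<in> {t - e<..<t + e} \<Longrightarrow> 0 < w \<Longrightarrow> \<bar>\<rho>t w r\<bar> \<le> g w" and e: "0 < e"
    using dom[OF t] by blast
  have ir: "set_integrable lborel {0<..w0} (\<lambda>y. \<rho>t y t)"
  proof (rule set_integrable_subset[where A="{0<..}"])
    show "set_integrable lborel {0<..} (\<lambda>y. \<rho>t y t)"
    proof (rule set_integrable_bound[OF gi])
      show "set_borel_measurable lborel {0<..} (\<lambda>y. \<rho>t y t)"
        using Y.rhot_meas[OF t] unfolding set_borel_measurable_def by simp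
      show "AE x in lborel. x \<in> {0<..} \<longrightarrow> norm (\<rho>t x t) \<le> norm (g x)"
        using gb[of t] e by (intro AE_I2) force
    qed
  qed auto
  have ftc: "(LBINT y:{0<..w0}. (y - w0) * \<rho>t y t) = - (ysm_D \<gamma> \<rho> w0 t * \<rho> w0 t)"
  proof (rule ftc_part[where J="\<lambda>v. J1 v t"])
    show "0 < w0" by (rule w0)
    show "((\<lambda>v. ysm_D \<gamma> \<rho> v t * \<rho> v t) has_real_derivative J1 y t) (at y)" if "0 < y" for y
      using flux[OF that t] .
    show "((\<lambda>v. J1 v t) has_real_derivative \<rho>t y t) (at y)" if "0 < y" for y
      using pde[OF that t] .
    show "continuous_on {0<..} (\<lambda>y. \<rho>t y t)" by (rule Y.cont_t_s[OF t])
    show "set_integrable lborel {0<..w0} (\<lambda>y. \<rho>t y t)" by (rule ir)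
    show "((\<lambda>w. ysm_D \<gamma> \<rho> w t * \<rho> w t) \<longlongrightarrow> 0) (at_right 0)" by (rule bd1[OF t])
    show "((\<lambda>w. J1 w t) \<longlongrightarrow> 0) (at_right 0)" by (rule bd3[OF t])
  qed
  have dd: "deriv (\<lambda>g. deriv (\<lambda>h. lorenz \<rho> h t) g) f = inverse (\<rho> w0 t)"
    by (rule DERIV_imp_deriv[OF Gd])
  have dT: "deriv (\<lambda>s. lorenz \<rho> f s) t = - (ysm_D \<gamma> \<rho> w0 t * \<rho> w0 t)"
    using DERIV_imp_deriv[OF Td] ftc by simp
  have int_eq: "(LBINT g:{0<..<1}. (min (deriv (\<lambda>h. lorenz \<rho> h t) g) (deriv (\<lambda>h. lorenz \<rho> h t) f))\<^sup>2)
      = (LBINT g:{0<..<1}. (min (dt.Gp g) w0)\<^sup>2)"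
    by (rule set_lebesgue_integral_cong) (use dL f in \<open>auto simp: w0_def\<close>)
  also have "\<dots> = (LBINT x:{0<..}. (min w0 x)\<^sup>2 * \<rho> x t)"
    by (rule dt.subst_lemma) (use bc_zero[OF t] w0 in auto)
  finally have ie: "\<gamma> / 2 * (LBINT g:{0<..<1}. (min (deriv (\<lambda>h. lorenz \<rho> h t) g) (deriv (\<lambda>h. lorenz \<rho> h t) f))\<^sup>2)
      = ysm_D \<gamma> \<rho> w0 t"
    by (simp add: ysm_D_def)
  have rpos: "0 < \<rho> w0 t" using pos[OF w0 t0] .
  show ?thesis
  proof (intro conjI ballI)
    show "(\<lambda>s. lorenz \<rho> f s) differentiable (at t)"
      using Td unfolding real_differentiable_def by blast
    show "(\<lambda>h. lorenz \<rho> h t) differentiable (at g)" if "g \<in> {0<..<1}" for g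
      using Ld[of g] that unfolding real_differentiable_def by auto
    show "(\<lambda>g. deriv (\<lambda>h. lorenz \<rho> h t) g) differentiable (at f)"
      using Gd unfolding real_differentiable_def by blast
    show "deriv (\<lambda>s. lorenz \<rho> f s) t =
          - (1 / deriv (\<lambda>g. deriv (\<lambda>h. lorenz \<rho> h t) g) f)
            * (\<gamma> / 2 * (LBINT g:{0<..<1}.
                 (min (deriv (\<lambda>h. lorenz \<rho> h t) g) (deriv (\<lambda>h. lorenz \<rho> h t) f))\<^sup>2))"
      unfolding dT dd ie using rpos by (simp add: field_simps)
  qed
qed

end
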